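(* Let $\gamma>0$ and let $K_{12}$ be the kernel of the Fourier multiplier $-\partial_{12}\Delta^{-1}\ln^{-\gamma}(e-\Delta)$ (i.e. the operator with symbol $-\frac{k_1k_2}{|k|^2}\ln^{-\gamma}(e+|k|^2)$). Then there is a constant $C>0$ depending only on $\gamma$ such that for all $x=(x_1,x_2)\in\mathbb{R}^2$ with $x_1>0$, $x_2>0$, $$K_{12}(x_1,x_2)\ge \frac{C x_1x_2}{|x|^4}\ln^{-\gamma}\Big(e+\frac1{|x|}\Big)e^{-|x|^2}.$$ *)

theory Defs
  imports "HOL-Analysis.Analysis"
begin

text \<open>Points of the plane are pairs of reals: x = (x1, x2).
  Fourier convention: f(x) = (2 pi)^(-2) int \<hat>f(k) e^(i k.x) dk, so that
  the derivative d/dx_j has symbol i k_j.\<close>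

definition symb12 :: "real \<Rightarrow> real \<times> real \<Rightarrow> real" where
  "symb12 \<gamma> k = - (fst k * snd k) / (norm k)^2 * (ln (exp 1 + (norm k)^2)) powr (- \<gamma>)"

text \<open>Gaussian-regularised inverse Fourier transform of the symbol; the kernel
  at x is the limit of this as eps tends to 0+.\<close>
definition K12_reg :: "real \<Rightarrow> real \<Rightarrow> real \<times> real \<Rightarrow> complex" where
  "K12_reg \<gamma> \<epsilon> x = (1 / (2 * pi)^2) *
     (LINT k|lborel. complex_of_real (symb12 \<gamma> k * exp (- \<epsilon> * (norm k)^2))
                       * cis (k \<bullet> x))"

end

theory Submission
  imports Defs "HOL-Probability.Probability" "HOL-Real_Asymp.Real_Asymp"
begin


lemma nd_eq:
  assumes a: "a > (0::real)"
  shows "normal_density 0 (1/sqrt(2*a)) x = sqrt(a/pi) * exp(-a*x\<^sup>2)"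
  using a by (simp add: normal_density_def real_sqrt_divide power_divide field_simps)

lemma gauss_int:
  assumes a: "a > (0::real)"
  shows "has_bochner_integral lborel (\<lambda>x. exp(-a*x\<^sup>2)) (sqrt(pi/a))"
proof -
  have "has_bochner_integral lborel (normal_density 0 (1/sqrt(2*a))) 1"
    using a by (simp add: has_bochner_integral_iff)
  from has_bochner_integral_mult_right[OF this, of "sqrt(pi/a)"]
  have "has_bochner_integral lborel (\<lambda>x. sqrt(pi/a) * normal_density 0 (1/sqrt(2*a)) x) (sqrt(pi/a))"
    by simp
  also have "(\<lambda>x. sqrt(pi/a) * normal_density 0 (1/sqrt(2*a)) x) = (\<lambda>x. exp(-a*x\<^sup>2))"
    by (rule ext, subst nd_eq[OF a]) (use a in \<open>simp add: real_sqrt_divide\<close>)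
  finally show ?thesis .
qed

lemma gauss_abs1:
  assumes a: "a > (0::real)"
  shows "has_bochner_integral lborel (\<lambda>x. \<bar>x\<bar> * exp(-a*x\<^sup>2)) (1/a)"
proof -
  have s: "0 < 1/sqrt(2*a)" using a by simp
  have "has_bochner_integral lborel (\<lambda>x. normal_density 0 (1/sqrt(2*a)) x * \<bar>x - 0\<bar>^(2*0+1))
     (2^0 * (1/sqrt(2*a))^(2*0+1) * fact 0 * sqrt (2 / pi))"
    by (rule normal_moment_abs_odd[OF s])
  from has_bochner_integral_mult_right[OF this, of "sqrt(pi/a)"]
  have "has_bochner_integral lborel (\<lambda>x. sqrt(pi/a) * (normal_density 0 (1/sqrt(2*a)) x * \<bar>x - 0\<bar>^(2*0+1)))
     (sqrt(pi/a) * (2^0 * (1/sqrt(2*a))^(2*0+1) * fact 0 * sqrt (2 / pi)))" .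
  also have "(\<lambda>x. sqrt(pi/a) * (normal_density 0 (1/sqrt(2*a)) x * \<bar>x - 0\<bar>^(2*0+1))) = (\<lambda>x. \<bar>x\<bar> * exp(-a*x\<^sup>2))"
    by (rule ext, subst nd_eq[OF a]) (use a in \<open>simp add: real_sqrt_divide\<close>)
  also have "sqrt(pi/a) * (2^0 * (1/sqrt(2*a))^(2*0+1) * fact 0 * sqrt (2 / pi)) = 1/a"
    using a by (simp add: real_sqrt_divide real_sqrt_mult field_simps)
  finally show ?thesis .
qed

lemma cis_meas[measurable]: "cis \<in> borel_measurable borel"
proof -
  have "continuous_on UNIV (\<lambda>x. cis x)" by (intro continuous_intros)
  thus ?thesis by (rule borel_measurable_continuous_onI)
qed

lemma gauss_ft0:
  assumes a: "a > (0::real)"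
  shows "has_bochner_integral lborel (\<lambda>k. complex_of_real (exp(-a*k\<^sup>2)) * cis (k*y))
           (complex_of_real (sqrt(pi/a) * exp(-y\<^sup>2/(4*a))))"
proof -
  define c where "c = sqrt (2*a)"
  have c: "c > 0" using a by (simp add: c_def)
  have c2: "c\<^sup>2 = 2*a" using a by (simp add: c_def)
  define t where "t = y / c"
  have "char std_normal_distribution t = exp (- (t^2) / 2)"
    by (simp add: char_std_normal_distribution)
  hence "(CLINT x|lborel. std_normal_density x *\<^sub>R iexp (t * x)) = exp (- (t^2) / 2)"
    unfolding char_def by (subst (asm) integral_density) auto
  hence "\<bar>c\<bar> *\<^sub>R (CLINT x|lborel. std_normal_density (0 + c*x) *\<^sub>R iexp (t * (0 + c*x))) = exp (- (t^2) / 2)"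
    using c by (subst (asm) lborel_integral_real_affine[where c=c and t=0]) auto
  hence "(CLINT x|lborel. std_normal_density (c*x) *\<^sub>R iexp (t * (c*x))) = exp (- (t^2) / 2) / c"
    using c by (simp add: field_simps scaleR_conv_of_real)
  moreover have "(\<lambda>x. std_normal_density (c*x) *\<^sub>R iexp (t * (c*x))) =
      (\<lambda>x. (1/sqrt(2*pi)) * (complex_of_real (exp(-a*x\<^sup>2)) * cis (x*y)))"
    using c c2 by (auto simp: fun_eq_iff std_normal_density_def t_def cis_conv_exp scaleR_conv_of_real
        power_mult_distrib mult_ac)
  ultimately have "(1/sqrt(2*pi)) * (CLINT x|lborel. complex_of_real (exp(-a*x\<^sup>2)) * cis (x*y)) = exp (- (t^2) / 2) / c"
    by simp
  hence I: "(CLINT x|lborel. complex_of_real (exp(-a*x\<^sup>2)) * cis (x*y)) = sqrt(2*pi) * exp (- (t^2) / 2) / c"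
    by (simp add: field_simps)
  have "sqrt(2*pi) * exp (- (t^2) / 2) / c = sqrt(pi/a) * exp(-y\<^sup>2/(4*a))"
    using a c c2 by (simp add: t_def c_def power_divide real_sqrt_divide real_sqrt_mult field_simps)
  note I = I[unfolded this]
  have int: "integrable lborel (\<lambda>k. complex_of_real (exp(-a*k\<^sup>2)) * cis (k*y))"
  proof (rule Bochner_Integration.integrable_bound)
    show "integrable lborel (\<lambda>k. exp(-a*k\<^sup>2))" using gauss_int[OF a] by (simp add: has_bochner_integral_iff)
    show "(\<lambda>k. complex_of_real (exp(-a*k\<^sup>2)) * cis (k*y)) \<in> borel_measurable lborel"
      by measurable
  qed (auto simp: norm_mult)
  show ?thesis using int I by (simp add: has_bochner_integral_iff)
qed



lemma gauss_ft1:
  assumes a: "a > (0::real)"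
  shows "has_bochner_integral lborel (\<lambda>k. complex_of_real (k*exp(-a*k\<^sup>2)) * cis (k*y))
           (\<i> * complex_of_real (y/(2*a) * sqrt(pi/a) * exp(-y\<^sup>2/(4*a))))"
proof -
  define E where "E = (\<lambda>k::real. complex_of_real(exp(-a*k\<^sup>2)) * cis(k*y))"
  define G where "G = (\<lambda>z::complex. - exp(complex_of_real(-a) * z\<^sup>2 + \<i> * complex_of_real y * z) / complex_of_real(2*a))"
  define G' where "G' = (\<lambda>z::complex. (z - \<i> * complex_of_real (y/(2*a))) * exp(complex_of_real(-a) * z\<^sup>2 + \<i> * complex_of_real y * z))"
  have Eexp: "exp(complex_of_real(-a) * (complex_of_real k)\<^sup>2 + \<i> * complex_of_real y * complex_of_real k) = E k" for k
    by (simp add: E_def cis_conv_exp exp_of_real[symmetric] mult_exp_exp algebra_simps)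
  have dG: "(G has_field_derivative G' z) (at z)" for z
    unfolding G_def G'_def using a
    by (auto intro!: derivative_eq_intros simp: field_simps power2_eq_square)
  define f where "f = (\<lambda>k::real. G' (complex_of_real k))"
  define F where "F = (\<lambda>k::real. G (complex_of_real k))"
  have f_eq: "f k = complex_of_real k * E k - \<i> * complex_of_real (y/(2*a)) * E k" for k
    unfolding f_def G'_def Eexp by (simp add: algebra_simps)
  have F_norm: "norm (F k) = exp(-a*k\<^sup>2)/(2*a)" for k
    unfolding F_def G_def Eexp using a by (simp add: E_def norm_mult norm_divide)
  have intE: "integrable lborel E"
    using gauss_ft0[OF a, of y] unfolding E_def by (simp add: has_bochner_integral_iff)
  have intkE: "integrable lborel (\<lambda>k. complex_of_real (k*exp(-a*k\<^sup>2)) * cis (k*y))"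
  proof (rule Bochner_Integration.integrable_bound)
    show "integrable lborel (\<lambda>k. \<bar>k\<bar> * exp(-a*k\<^sup>2))" using gauss_abs1[OF a] by (simp add: has_bochner_integral_iff)
    show "(\<lambda>k. complex_of_real (k*exp(-a*k\<^sup>2)) * cis (k*y)) \<in> borel_measurable lborel"
      by measurable
  qed (auto simp: norm_mult abs_mult)
  have kE: "complex_of_real k * E k = complex_of_real (k*exp(-a*k\<^sup>2)) * cis (k*y)" for k
    by (simp add: E_def)
  have intf: "integrable lborel f"
    unfolding f_eq[abs_def] kE by (intro Bochner_Integration.integrable_diff integrable_mult_right intE intkE)
  have FTC: "interval_lebesgue_integral lborel (-\<infinity>) \<infinity> f = 0 - 0"
  proof (rule interval_integral_FTC_integrable)
    show "(F has_vector_derivative f x) (at x)" for x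
      unfolding F_def f_def by (rule has_vector_derivative_real_field[OF dG])
    show "isCont f x" for x
      unfolding f_def G'_def by (intro continuous_intros)
    show "set_integrable lborel (einterval (-\<infinity>) \<infinity>) f"
      using intf by (simp add: set_integrable_def einterval_eq_UNIV)
    have lim_top: "(F \<longlongrightarrow> 0) at_top"
    proof (rule tendsto_norm_zero_cancel)
      show "((\<lambda>k. norm (F k)) \<longlongrightarrow> 0) at_top" unfolding F_norm using a by real_asymp
    qed
    have lim_bot: "(F \<longlongrightarrow> 0) at_bot"
    proof (rule tendsto_norm_zero_cancel)
      show "((\<lambda>k. norm (F k)) \<longlongrightarrow> 0) at_bot" unfolding F_norm using a by real_asymp
    qed
    show "((F \<circ> real_of_ereal) \<longlongrightarrow> 0) (at_right (-\<infinity>))"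
      unfolding at_right_MInf filterlim_filtermap using lim_bot by (simp add: o_def)
    show "((F \<circ> real_of_ereal) \<longlongrightarrow> 0) (at_left \<infinity>)"
      unfolding at_left_PInf filterlim_filtermap using lim_top by (simp add: o_def)
  qed simp
  hence "integral\<^sup>L lborel f = 0"
    by (simp add: interval_lebesgue_integral_def set_lebesgue_integral_def einterval_eq_UNIV)
  have intkE': "integrable lborel (\<lambda>k. complex_of_real k * E k)"
    using intkE by (simp only: kE)
  have "(LINT k|lborel. complex_of_real k * E k) - (LINT k|lborel. \<i> * complex_of_real (y/(2*a)) * E k) = 0"
    using \<open>integral\<^sup>L lborel f = 0\<close> unfolding f_eq[abs_def]
    by (subst (asm) Bochner_Integration.integral_diff) (auto intro!: intE intkE' integrable_mult_right)
  hence "(LINT k|lborel. complex_of_real (k*exp(-a*k\<^sup>2)) * cis (k*y)) - \<i> * complex_of_real (y/(2*a)) * integral\<^sup>L lborel E = 0"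
    by (simp only: kE integral_mult_right_zero)
  moreover have "integral\<^sup>L lborel E = complex_of_real (sqrt(pi/a) * exp(-y\<^sup>2/(4*a)))"
    using gauss_ft0[OF a, of y] unfolding E_def by (simp add: has_bochner_integral_iff)
  ultimately have "(LINT k|lborel. complex_of_real (k*exp(-a*k\<^sup>2)) * cis (k*y)) =
      \<i> * complex_of_real (y/(2*a) * sqrt(pi/a) * exp(-y\<^sup>2/(4*a)))"
    by (simp add: mult_ac)
  thus ?thesis using intkE by (simp add: has_bochner_integral_iff)
qed



lemma prod_hbi:
  fixes f g :: "real \<Rightarrow> 'a::{real_normed_field, banach, second_countable_topology}"
  assumes hf: "has_bochner_integral lborel f I" and hg: "has_bochner_integral lborel g J"
  shows "has_bochner_integral lborel (\<lambda>k::real\<times>real. f (fst k) * g (snd k)) (I * J)"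
proof -
  have fi: "integrable lborel f" and fI: "integral\<^sup>L lborel f = I"
    using hf by (auto simp: has_bochner_integral_iff)
  have gi: "integrable lborel g" and gJ: "integral\<^sup>L lborel g = J"
    using hg by (auto simp: has_bochner_integral_iff)
  have [measurable]: "f \<in> borel_measurable borel" "g \<in> borel_measurable borel"
    using borel_measurable_integrable[OF fi] borel_measurable_integrable[OF gi] by auto
  have int: "integrable (lborel \<Otimes>\<^sub>M lborel) (\<lambda>(x,y). f x * g y)"
  proof (rule lborel_pair.Fubini_integrable)
    show "(\<lambda>(x,y). f x * g y) \<in> borel_measurable (lborel \<Otimes>\<^sub>M lborel)" by measurable
    have "integrable lborel (\<lambda>x. norm (f x) * (\<integral>y. norm (g y) \<partial>lborel))"
      using fi by (intro integrable_mult_left integrable_norm)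
    thus "integrable lborel (\<lambda>x. \<integral>y. norm (case (x, y) of (x, y) \<Rightarrow> f x * g y) \<partial>lborel)"
      by (simp add: norm_mult)
    show "AE x in lborel. integrable lborel (\<lambda>y. case (x, y) of (x, y) \<Rightarrow> f x * g y)"
      using gi by (auto intro!: integrable_mult_right)
  qed
  have "integral\<^sup>L (lborel \<Otimes>\<^sub>M lborel) (\<lambda>(x,y). f x * g y) = (\<integral>x. \<integral>y. f x * g y \<partial>lborel \<partial>lborel)"
    using lborel_pair.integral_fst[OF int] by simp
  also have "\<dots> = I * J" using fI gJ by simp
  finally have "has_bochner_integral (lborel \<Otimes>\<^sub>M lborel) (\<lambda>(x,y). f x * g y) (I * J)"
    using int by (simp add: has_bochner_integral_iff)
  thus ?thesis by (simp add: lborel_prod split_beta')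
qed

lemma G2D:
  assumes a: "a > (0::real)"
  shows "has_bochner_integral lborel
     (\<lambda>k::real\<times>real. complex_of_real (-(fst k * snd k) * exp(-a*(norm k)\<^sup>2)) * cis (k \<bullet> x))
     (complex_of_real (pi * fst x * snd x / (4*a^3) * exp (-(norm x)\<^sup>2/(4*a))))"
proof -
  obtain x1 x2 where x: "x = (x1, x2)" by (cases x)
  have "has_bochner_integral lborel
     (\<lambda>k::real\<times>real. (complex_of_real (fst k*exp(-a*(fst k)\<^sup>2)) * cis (fst k*x1)) *
                      (complex_of_real (snd k*exp(-a*(snd k)\<^sup>2)) * cis (snd k*x2)))
     ((\<i> * complex_of_real (x1/(2*a) * sqrt(pi/a) * exp(-x1\<^sup>2/(4*a)))) *
      (\<i> * complex_of_real (x2/(2*a) * sqrt(pi/a) * exp(-x2\<^sup>2/(4*a)))))"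
    by (rule prod_hbi[OF gauss_ft1[OF a] gauss_ft1[OF a]])
  from has_bochner_integral_minus[OF this]
  have h: "has_bochner_integral lborel
     (\<lambda>k::real\<times>real. - ((complex_of_real (fst k*exp(-a*(fst k)\<^sup>2)) * cis (fst k*x1)) *
                      (complex_of_real (snd k*exp(-a*(snd k)\<^sup>2)) * cis (snd k*x2))))
     (- ((\<i> * complex_of_real (x1/(2*a) * sqrt(pi/a) * exp(-x1\<^sup>2/(4*a)))) *
      (\<i> * complex_of_real (x2/(2*a) * sqrt(pi/a) * exp(-x2\<^sup>2/(4*a))))))" .
  have e1: "(\<lambda>k::real\<times>real. - ((complex_of_real (fst k*exp(-a*(fst k)\<^sup>2)) * cis (fst k*x1)) *
                      (complex_of_real (snd k*exp(-a*(snd k)\<^sup>2)) * cis (snd k*x2)))) =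
      (\<lambda>k::real\<times>real. complex_of_real (-(fst k * snd k) * exp(-a*(norm k)\<^sup>2)) * cis (k \<bullet> x))"
  proof (rule ext)
    fix k :: "real \<times> real"
    obtain k1 k2 where k: "k = (k1, k2)" by (cases k)
    have n: "(norm k)\<^sup>2 = k1\<^sup>2 + k2\<^sup>2" by (simp add: k norm_Pair)
    show "- ((complex_of_real (fst k*exp(-a*(fst k)\<^sup>2)) * cis (fst k*x1)) *
                      (complex_of_real (snd k*exp(-a*(snd k)\<^sup>2)) * cis (snd k*x2))) =
          complex_of_real (-(fst k * snd k) * exp(-a*(norm k)\<^sup>2)) * cis (k \<bullet> x)"
    proof -
      have ex: "exp(-a*(k1\<^sup>2+k2\<^sup>2)) = exp(-a*k1\<^sup>2)*exp(-a*k2\<^sup>2)"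
        by (simp add: exp_add[symmetric] algebra_simps)
      show ?thesis unfolding n ex by (simp add: k x cis_mult[symmetric] mult_ac)
    qed
  qed
  have e2: "- ((\<i> * complex_of_real (x1/(2*a) * sqrt(pi/a) * exp(-x1\<^sup>2/(4*a)))) *
      (\<i> * complex_of_real (x2/(2*a) * sqrt(pi/a) * exp(-x2\<^sup>2/(4*a))))) =
      complex_of_real (pi * fst x * snd x / (4*a^3) * exp (-(norm x)\<^sup>2/(4*a)))"
  proof -
    have ii: "\<And>A B::real. - ((\<i> * complex_of_real A) * (\<i> * complex_of_real B)) = complex_of_real (A*B)"
      by (simp add: complex_eq_iff)
    have nx: "(norm x)\<^sup>2 = x1\<^sup>2 + x2\<^sup>2" by (simp add: x norm_Pair)
    have sq: "sqrt(pi/a) * sqrt(pi/a) = pi/a" using a by simp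
    have ex: "exp(-(x1\<^sup>2 + x2\<^sup>2)/(4*a)) = exp(-x1\<^sup>2/(4*a)) * exp(-x2\<^sup>2/(4*a))"
      by (simp add: exp_add[symmetric] diff_divide_distrib)
    have "(x1/(2*a) * sqrt(pi/a) * exp(-x1\<^sup>2/(4*a))) * (x2/(2*a) * sqrt(pi/a) * exp(-x2\<^sup>2/(4*a)))
        = (x1/(2*a)) * (x2/(2*a)) * (sqrt(pi/a) * sqrt(pi/a)) * (exp(-x1\<^sup>2/(4*a)) * exp(-x2\<^sup>2/(4*a)))"
      by (simp only: mult_ac)
    also have "\<dots> = pi * fst x * snd x / (4*a^3) * exp (-(norm x)\<^sup>2/(4*a))"
      unfolding sq nx ex[symmetric] using a by (simp add: x field_simps power3_eq_cube)
    finally show ?thesis unfolding ii by simp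
  qed
  show ?thesis using h unfolding e1 e2 .
qed

lemma G2D_abs:
  assumes a: "a > (0::real)"
  shows "has_bochner_integral lborel
     (\<lambda>k::real\<times>real. \<bar>fst k * snd k\<bar> * exp(-a*(norm k)\<^sup>2)) (1/a^2)"
proof -
  have "has_bochner_integral lborel
     (\<lambda>k::real\<times>real. (\<bar>fst k\<bar> * exp(-a*(fst k)\<^sup>2)) * (\<bar>snd k\<bar> * exp(-a*(snd k)\<^sup>2))) (1/a * (1/a))"
    by (rule prod_hbi[OF gauss_abs1[OF a] gauss_abs1[OF a]])
  moreover have "(\<lambda>k::real\<times>real. (\<bar>fst k\<bar> * exp(-a*(fst k)\<^sup>2)) * (\<bar>snd k\<bar> * exp(-a*(snd k)\<^sup>2))) =
     (\<lambda>k::real\<times>real. \<bar>fst k * snd k\<bar> * exp(-a*(norm k)\<^sup>2))"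
    by (auto simp: fun_eq_iff norm_Pair abs_mult algebra_simps exp_add[symmetric] exp_diff)
  ultimately show ?thesis by (simp add: power2_eq_square)
qed



lemma rGamma_meas[measurable]: "(rGamma :: real \<Rightarrow> real) \<in> borel_measurable borel"
  by (rule borel_measurable_continuous_onI) (rule continuous_on_rGamma)

definition psi :: "real \<Rightarrow> real \<Rightarrow> real \<Rightarrow> real" where
  "psi \<gamma> t s = indicator {0<..} t * indicator {0<..} s *
     (t powr (\<gamma>-1) * rGamma t / Gamma \<gamma> * s powr (t-1) * exp (- (exp 1 * s)))"

lemma psi_meas[measurable (raw)]:
  assumes [measurable]: "f \<in> borel_measurable M" "g \<in> borel_measurable M"
  shows "(\<lambda>x. psi \<gamma> (f x) (g x)) \<in> borel_measurable M"
  unfolding psi_def by measurable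

lemma psi_nonneg: "\<gamma> > 0 \<Longrightarrow> psi \<gamma> t s \<ge> 0"
  unfolding psi_def by (auto simp: indicator_def rGamma_inverse_Gamma intro!: mult_nonneg_nonneg)

lemma GS:
  assumes b: "b > (0::real)" and c: "c > 0"
  shows "(\<integral>\<^sup>+s. ennreal (indicator {0<..} s * s powr (c-1) * exp(-b * s)) \<partial>lborel) = ennreal (Gamma c / b powr c)"
proof -
  let ?g = "\<lambda>s. indicator {0<..} s * s powr (c-1) * exp(-b * s)"
  have "ennreal (Gamma c) = (\<integral>\<^sup>+t. ennreal (indicator {0..} t * t powr (c - 1) / exp t) \<partial>lborel)"
    using Gamma_conv_nn_integral_real[OF c] by simp
  also have "\<dots> = ennreal \<bar>b\<bar> * (\<integral>\<^sup>+s. ennreal (indicator {0..} (0 + b * s) * (0 + b * s) powr (c - 1) / exp (0 + b * s)) \<partial>lborel)"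
    using b by (intro nn_integral_real_affine) auto
  also have "(\<lambda>s. ennreal (indicator {0..} (0 + b * s) * (0 + b * s) powr (c - 1) / exp (0 + b * s))) =
             (\<lambda>s. ennreal (b powr (c-1)) * ennreal (?g s))"
  proof (rule ext)
    fix s
    show "ennreal (indicator {0..} (0 + b * s) * (0 + b * s) powr (c - 1) / exp (0 + b * s)) = ennreal (b powr (c-1)) * ennreal (?g s)"
    proof (cases "s > 0")
      case True
      then show ?thesis using b
        by (simp add: ennreal_mult[symmetric] powr_mult exp_minus field_simps indicator_def)
    next
      case False
      then show ?thesis using b
        by (auto simp: indicator_def zero_le_mult_iff)
    qed
  qed
  also have "(\<integral>\<^sup>+s. ennreal (b powr (c-1)) * ennreal (?g s) \<partial>lborel) = ennreal (b powr (c-1)) * (\<integral>\<^sup>+s. ennreal (?g s) \<partial>lborel)"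
    by (rule nn_integral_cmult) measurable
  finally have eq: "ennreal (Gamma c) = ennreal (b powr c) * (\<integral>\<^sup>+s. ennreal (?g s) \<partial>lborel)"
    using b by (simp add: ennreal_mult[symmetric] mult.assoc[symmetric] powr_add[symmetric] powr_mult_base)
  have "(\<integral>\<^sup>+s. ennreal (?g s) \<partial>lborel) = ennreal (inverse (b powr c)) * (ennreal (b powr c) * (\<integral>\<^sup>+s. ennreal (?g s) \<partial>lborel))"
    using b by (simp add: mult.assoc[symmetric] ennreal_mult[symmetric])
  also have "\<dots> = ennreal (Gamma c / b powr c)"
    unfolding eq[symmetric] using b c by (simp add: ennreal_mult[symmetric] divide_inverse mult.commute)
  finally show ?thesis .
qed

lemma int_psi:
  assumes g: "\<gamma> > 0" and \<beta>: "\<beta> \<ge> 0"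
  shows "(\<integral>\<^sup>+s. ennreal (psi \<gamma> t s * exp (- \<beta> * s)) \<partial>lborel) =
         ennreal (indicator {0<..} t * t powr (\<gamma>-1) * exp (- ln (exp 1 + \<beta>) * t) / Gamma \<gamma>)"
proof (cases "t > 0")
  case False
  then show ?thesis by (simp add: psi_def)
next
  case True
  define C where "C = t powr (\<gamma>-1) * rGamma t / Gamma \<gamma>"
  have C: "C \<ge> 0" using True g by (simp add: C_def rGamma_inverse_Gamma)
  have "(\<lambda>s. ennreal (psi \<gamma> t s * exp (- \<beta> * s))) =
        (\<lambda>s. ennreal C * ennreal (indicator {0<..} s * s powr (t-1) * exp(- (exp 1 + \<beta>) * s)))"
  proof -
    have ee: "\<And>s. exp(- (exp 1 + \<beta>) * s) = exp (- (exp 1 * s)) * exp (- \<beta> * s)"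
      by (simp add: exp_add[symmetric] algebra_simps)
    show ?thesis unfolding ee
      using True C by (auto simp: fun_eq_iff psi_def C_def ennreal_mult[symmetric] indicator_def mult_ac)
  qed
  hence "(\<integral>\<^sup>+s. ennreal (psi \<gamma> t s * exp (- \<beta> * s)) \<partial>lborel) =
      ennreal C * (\<integral>\<^sup>+s. ennreal (indicator {0<..} s * s powr (t-1) * exp(- (exp 1 + \<beta>) * s)) \<partial>lborel)"
    by (simp add: nn_integral_cmult)
  also have "\<dots> = ennreal C * ennreal (Gamma t / (exp 1 + \<beta>) powr t)"
    using \<beta> True by (subst GS) (auto intro: add_pos_nonneg)
  also have "\<dots> = ennreal (C * (Gamma t / (exp 1 + \<beta>) powr t))"
    using C True \<beta> by (simp add: ennreal_mult[symmetric] add_pos_nonneg)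
  also have "C * (Gamma t / (exp 1 + \<beta>) powr t) = indicator {0<..} t * t powr (\<gamma>-1) * exp (- ln (exp 1 + \<beta>) * t) / Gamma \<gamma>"
  proof -
    have "(exp 1 + \<beta>) powr t = exp (t * ln (exp 1 + \<beta>))"
      using \<beta> by (simp add: powr_def add_pos_nonneg) (smt (verit) exp_gt_zero)
    moreover have "rGamma t * Gamma t = 1"
    proof -
      have "Gamma t \<noteq> 0" using Gamma_real_pos[OF True] by linarith
      thus ?thesis by (simp add: rGamma_inverse_Gamma)
    qed
    ultimately show ?thesis using True
      by (simp add: C_def exp_minus field_simps)
  qed
  finally show ?thesis .
qed

definition R :: "real \<Rightarrow> real \<Rightarrow> ennreal" where
  "R \<gamma> u = (\<integral>\<^sup>+t. \<integral>\<^sup>+s. ennreal (psi \<gamma> t s * (if s \<le> u then 1 else 0)) \<partial>lborel \<partial>lborel)"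

lemma R_meas[measurable]: "R \<gamma> \<in> borel_measurable borel"
  unfolding R_def[abs_def] by measurable

lemma R_le1:
  assumes g: "\<gamma> > 0"
  shows "R \<gamma> u \<le> 1"
proof -
  have "R \<gamma> u \<le> (\<integral>\<^sup>+t. \<integral>\<^sup>+s. ennreal (psi \<gamma> t s * exp (- 0 * s)) \<partial>lborel \<partial>lborel)"
    unfolding R_def using psi_nonneg[OF g]
    by (intro nn_integral_mono ennreal_leI) auto
  also have "\<dots> = (\<integral>\<^sup>+t. ennreal (indicator {0<..} t * t powr (\<gamma>-1) * exp (- 1 * t) / Gamma \<gamma>) \<partial>lborel)"
    by (simp only: int_psi[OF g order.refl]) simp
  also have "\<dots> = (\<integral>\<^sup>+t. ennreal (inverse (Gamma \<gamma>)) * ennreal (indicator {0<..} t * t powr (\<gamma>-1) * exp (- 1 * t)) \<partial>lborel)"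
    using g by (intro nn_integral_cong) (simp add: ennreal_mult[symmetric] divide_inverse mult_ac)
  also have "\<dots> = ennreal (inverse (Gamma \<gamma>)) * ennreal (Gamma \<gamma> / 1 powr \<gamma>)"
  proof -
    have G1: "(\<integral>\<^sup>+s. ennreal (indicator {0<..} s * s powr (\<gamma>-1) * exp(- 1 * s)) \<partial>lborel) = ennreal (Gamma \<gamma> / 1 powr \<gamma>)"
      by (rule GS[OF zero_less_one g])
    show ?thesis by (subst nn_integral_cmult) (measurable, simp only: G1)
  qed
  also have "\<dots> = 1"
  proof -
    have "Gamma \<gamma> \<noteq> 0" using Gamma_real_pos[OF g] by linarith
    thus ?thesis using g by (simp add: ennreal_mult[symmetric])
  qed
  finally show ?thesis .
qed

lemma exp_tail:
  assumes l: "la > (0::real)" and s: "s > 0"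
  shows "(\<integral>\<^sup>+u. ennreal ((if s \<le> u then 1 else 0) * (indicator {0..} u * exp(-la * u))) \<partial>lborel) = ennreal (exp (-la * s) / la)"
proof -
  have "(\<integral>\<^sup>+u. ennreal ((if s \<le> u then 1 else 0) * (indicator {0..} u * exp(-la * u))) \<partial>lborel) =
        (\<integral>\<^sup>+u\<in>{s..}. ennreal (exp(-la * u)) \<partial>lborel)"
    using s by (intro nn_integral_cong) (auto simp: indicator_def)
  also have "\<dots> = ennreal (0 - (- exp(-la * s)/la))"
  proof (rule nn_integral_FTC_atLeast)
    show "((\<lambda>x. - exp(-la * x)/la) has_real_derivative exp(-la * x)) (at x)" for x
      using l by (auto intro!: derivative_eq_intros)
    show "((\<lambda>x. - exp(-la * x)/la) \<longlongrightarrow> 0) at_top" using l by real_asymp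
  qed auto
  finally show ?thesis by simp
qed

lemma REP:
  assumes g: "\<gamma> > 0" and l: "la > (0::real)"
  shows "(\<integral>\<^sup>+u. R \<gamma> u * ennreal (indicator {0..} u * exp(-la * u)) \<partial>lborel) = ennreal (ln (exp 1 + la) powr (-\<gamma>) / la)"
proof -
  define E where "E = (\<lambda>u. ennreal (indicator {0..} u * exp(-la * u)))"
  define \<Phi> where "\<Phi> = (\<lambda>t s u. ennreal (psi \<gamma> t s * (if s \<le> u then 1 else 0)) * E u)"
  have [measurable]: "E \<in> borel_measurable borel" unfolding E_def by measurable
  have m3[measurable]: "(\<lambda>x. \<Phi> (f x) (g x) (h x)) \<in> borel_measurable M"
    if [measurable]: "f \<in> borel_measurable M" "g \<in> borel_measurable M" "h \<in> borel_measurable M" for f g h and M :: "'a measure"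
    unfolding \<Phi>_def by measurable
  have "(\<integral>\<^sup>+u. R \<gamma> u * E u \<partial>lborel) = (\<integral>\<^sup>+u. \<integral>\<^sup>+t. \<integral>\<^sup>+s. \<Phi> t s u \<partial>lborel \<partial>lborel \<partial>lborel)"
  proof (rule nn_integral_cong)
    fix u
    have "R \<gamma> u * E u = (\<integral>\<^sup>+t. (\<integral>\<^sup>+s. ennreal (psi \<gamma> t s * (if s \<le> u then 1 else 0)) \<partial>lborel) * E u \<partial>lborel)"
      unfolding R_def by (rule nn_integral_multc[symmetric]) measurable
    also have "\<dots> = (\<integral>\<^sup>+t. \<integral>\<^sup>+s. \<Phi> t s u \<partial>lborel \<partial>lborel)"
      unfolding \<Phi>_def by (intro nn_integral_cong nn_integral_multc[symmetric]) measurable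
    finally show "R \<gamma> u * E u = (\<integral>\<^sup>+t. \<integral>\<^sup>+s. \<Phi> t s u \<partial>lborel \<partial>lborel)" .
  qed
  also have "\<dots> = (\<integral>\<^sup>+t. \<integral>\<^sup>+u. \<integral>\<^sup>+s. \<Phi> t s u \<partial>lborel \<partial>lborel \<partial>lborel)"
    by (rule lborel_pair.Fubini') measurable
  also have "\<dots> = (\<integral>\<^sup>+t. \<integral>\<^sup>+s. \<integral>\<^sup>+u. \<Phi> t s u \<partial>lborel \<partial>lborel \<partial>lborel)"
    by (intro nn_integral_cong lborel_pair.Fubini') measurable
  also have "\<dots> = (\<integral>\<^sup>+t. \<integral>\<^sup>+s. ennreal (psi \<gamma> t s * exp (-la * s)) * ennreal (1/la) \<partial>lborel \<partial>lborel)"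
  proof (intro nn_integral_cong)
    fix t s
    show "(\<integral>\<^sup>+u. \<Phi> t s u \<partial>lborel) = ennreal (psi \<gamma> t s * exp (-la * s)) * ennreal (1/la)"
    proof (cases "s > 0")
      case False
      then show ?thesis by (simp add: \<Phi>_def psi_def)
    next
      case True
      have "(\<integral>\<^sup>+u. \<Phi> t s u \<partial>lborel) = (\<integral>\<^sup>+u. ennreal (psi \<gamma> t s) * ennreal ((if s \<le> u then 1 else 0) * (indicator {0..} u * exp(-la * u))) \<partial>lborel)"
        using psi_nonneg[OF g] by (intro nn_integral_cong) (simp add: \<Phi>_def E_def ennreal_mult[symmetric])
      also have "\<dots> = ennreal (psi \<gamma> t s) * ennreal (exp (-la * s) / la)"
        by (subst nn_integral_cmult) (measurable, simp only: exp_tail[OF l True])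
      also have "\<dots> = ennreal (psi \<gamma> t s * exp (-la * s)) * ennreal (1/la)"
        using psi_nonneg[OF g] l by (simp add: ennreal_mult[symmetric])
      finally show ?thesis .
    qed
  qed
  also have "\<dots> = (\<integral>\<^sup>+t. ennreal (1/la) * ennreal (inverse (Gamma \<gamma>)) * ennreal (indicator {0<..} t * t powr (\<gamma>-1) * exp (- ln (exp 1 + la) * t)) \<partial>lborel)"
  proof (intro nn_integral_cong)
    fix t
    have "(\<integral>\<^sup>+s. ennreal (psi \<gamma> t s * exp (-la * s)) * ennreal (1/la) \<partial>lborel) =
          (\<integral>\<^sup>+s. ennreal (psi \<gamma> t s * exp (-la * s)) \<partial>lborel) * ennreal (1/la)"
      by (rule nn_integral_multc) measurable
    also have "\<dots> = ennreal (indicator {0<..} t * t powr (\<gamma>-1) * exp (- ln (exp 1 + la) * t) / Gamma \<gamma>) * ennreal (1/la)"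
      using l by (simp only: int_psi[OF g less_imp_le[OF l]])
    also have "\<dots> = ennreal (1/la) * ennreal (inverse (Gamma \<gamma>)) * ennreal (indicator {0<..} t * t powr (\<gamma>-1) * exp (- ln (exp 1 + la) * t))"
      using l g by (simp add: ennreal_mult[symmetric] divide_inverse mult_ac)
    finally show "(\<integral>\<^sup>+s. ennreal (psi \<gamma> t s * exp (-la * s)) * ennreal (1/la) \<partial>lborel) =
        ennreal (1/la) * ennreal (inverse (Gamma \<gamma>)) * ennreal (indicator {0<..} t * t powr (\<gamma>-1) * exp (- ln (exp 1 + la) * t))" .
  qed
  also have "\<dots> = ennreal (1/la) * ennreal (inverse (Gamma \<gamma>)) * ennreal (Gamma \<gamma> / ln (exp 1 + la) powr \<gamma>)"
  proof -
    have L: "ln (exp 1 + la) > 0" using l by (intro ln_gt_zero) (smt (verit) one_less_exp_iff)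
    show ?thesis by (subst nn_integral_cmult) (measurable, simp only: GS[OF L g])
  qed
  also have "\<dots> = ennreal (ln (exp 1 + la) powr (-\<gamma>) / la)"
  proof -
    have "Gamma \<gamma> \<noteq> 0" using Gamma_real_pos[OF g] by linarith
    thus ?thesis using l g by (simp add: ennreal_mult[symmetric] powr_minus_divide)
  qed
  finally show ?thesis unfolding E_def .
qed

lemma Gamma_le1:
  assumes "0 \<le> t" "t \<le> (1::real)"
  shows "Gamma (1 + t) \<le> 1"
proof -
  have "(ln \<circ> Gamma) ((1 - t) *\<^sub>R 1 + t *\<^sub>R 2) \<le> (1 - t) * (ln \<circ> Gamma) 1 + t * (ln \<circ> Gamma) (2::real)"
    by (rule convex_onD[OF log_convex_Gamma_real]) (use assms in auto)
  moreover have "Gamma (2::real) = 1" using Gamma_plus1[of "1::real"] by simp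
  ultimately have "ln (Gamma (1 + t)) \<le> 0" by (simp add: algebra_simps)
  moreover have "Gamma (1 + t) > 0" using assms by (intro Gamma_real_pos) simp
  ultimately show ?thesis by simp
qed

lemma rGamma_ge:
  assumes "0 < t" "t \<le> (1::real)"
  shows "rGamma t \<ge> t"
proof -
  have "rGamma t = t * rGamma (t + 1)" using rGamma_plus1[of t] by simp
  also have "rGamma (t + 1) = inverse (Gamma (1 + t))" by (simp add: rGamma_inverse_Gamma add.commute)
  also have "inverse (Gamma (1 + t)) \<ge> 1"
  proof -
    have "Gamma (1 + t) > 0" using assms by (intro Gamma_real_pos) simp
    thus ?thesis using Gamma_le1[of t] assms by (simp add: one_le_inverse)
  qed
  ultimately show ?thesis using assms by (simp add: mult_le_cancel_left1)
qed

lemma PW: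
  assumes a: "a > -1" and c: "c \<ge> (0::real)"
  shows "(\<integral>\<^sup>+x. ennreal (indicator {0<..c} x * x powr a) \<partial>lborel) = ennreal (c powr (a+1) / (a+1))"
proof -
  have "(\<integral>\<^sup>+x. ennreal (x powr a) * indicator {0..c} x \<partial>lborel) = ennreal (c powr (a+1) / (a+1))"
    by (rule nn_integral_has_integral_lebesgue'[OF _ has_integral_powr_from_0[OF a c]]) simp
  moreover have "(\<lambda>x. ennreal (indicator {0<..c} x * x powr a)) = (\<lambda>x. ennreal (x powr a) * indicator {0..c} x)"
    by (auto simp: fun_eq_iff indicator_def)
  ultimately show ?thesis by simp
qed

lemma R_lower:
  assumes g: "\<gamma> > 0" and v: "v > 0"
  shows "ennreal (exp(- exp 1 - 1) / (Gamma \<gamma> * \<gamma> * 2 powr \<gamma>) * ln (exp 1 + 1/v) powr (-\<gamma>)) \<le> R \<gamma> v"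
proof -
  define w where "w = min v 1"
  define L where "L = ln (1/w)"
  define \<delta> where "\<delta> = 1/(1+L)"
  define K where "K = exp(- exp 1)/Gamma \<gamma>"
  have Gp: "Gamma \<gamma> > 0" using g by simp
  have w: "0 < w" "w \<le> 1" "w \<le> v" using v by (auto simp: w_def)
  have L: "L \<ge> 0" using w by (simp add: L_def)
  have d: "0 < \<delta>" "\<delta> \<le> 1" "\<delta> * L \<le> 1" using L by (auto simp: \<delta>_def field_simps)
  have K: "K > 0" using Gp by (simp add: K_def)
  have ep: "0 < exp 1 + 1/v" using v by (intro add_pos_pos) auto
  define B where "B = (\<lambda>t s. indicator {0<..\<delta>} t * (K * t powr \<gamma>) * (indicator {0<..w} s * s powr (t-1)))"
  have "(\<integral>\<^sup>+t. ennreal (indicator {0<..\<delta>} t * (K * exp (-1)) * t powr (\<gamma>-1)) \<partial>lborel)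
     \<le> (\<integral>\<^sup>+t. \<integral>\<^sup>+s. ennreal (B t s) \<partial>lborel \<partial>lborel)"
  proof (rule nn_integral_mono)
    fix t
    show "ennreal (indicator {0<..\<delta>} t * (K * exp (-1)) * t powr (\<gamma>-1)) \<le> (\<integral>\<^sup>+s. ennreal (B t s) \<partial>lborel)"
    proof (cases "t \<in> {0<..\<delta>}")
      case False
      then show ?thesis by simp
    next
      case True
      hence t: "0 < t" "t \<le> \<delta>" by auto
      have "(\<integral>\<^sup>+s. ennreal (B t s) \<partial>lborel) = (\<integral>\<^sup>+s. ennreal (K * t powr \<gamma>) * ennreal (indicator {0<..w} s * s powr (t-1)) \<partial>lborel)"
        using True K by (intro nn_integral_cong) (simp add: B_def ennreal_mult[symmetric])
      also have "\<dots> = ennreal (K * t powr \<gamma>) * ennreal (w powr (t - 1 + 1) / (t - 1 + 1))"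
        using t w by (subst nn_integral_cmult) (measurable, simp only: PW)
      also have "\<dots> = ennreal (K * t powr \<gamma> * (w powr t / t))"
        using K t w by (simp add: ennreal_mult[symmetric])
      also have "K * t powr \<gamma> * (w powr t / t) = K * t powr (\<gamma>-1) * w powr t"
        using t by (simp add: powr_diff)
      finally have eq: "(\<integral>\<^sup>+s. ennreal (B t s) \<partial>lborel) = ennreal (K * t powr (\<gamma>-1) * w powr t)" .
      have "w powr t = exp (- (t * L))" using w by (simp add: powr_def L_def ln_div)
      also have "\<dots> \<ge> exp (-1)"
      proof -
        have "t * L \<le> \<delta> * L" using t L by (intro mult_right_mono) auto
        thus ?thesis using d by simp
      qed
      finally have "exp (-1) \<le> w powr t" .
      hence "exp (-1) * t powr (\<gamma>-1) \<le> w powr t * t powr (\<gamma>-1)"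
        by (rule mult_right_mono) simp
      hence "K * (exp (-1) * t powr (\<gamma>-1)) \<le> K * (w powr t * t powr (\<gamma>-1))"
        using K by (intro mult_left_mono) auto
      hence "K * exp (-1) * t powr (\<gamma>-1) \<le> K * t powr (\<gamma>-1) * w powr t"
        by (simp only: mult_ac)
      thus ?thesis unfolding eq using True by (intro ennreal_leI) simp
    qed
  qed
  moreover have "(\<integral>\<^sup>+t. \<integral>\<^sup>+s. ennreal (B t s) \<partial>lborel \<partial>lborel) \<le> R \<gamma> v"
    unfolding R_def
  proof (intro nn_integral_mono ennreal_leI)
    fix t s
    show "B t s \<le> psi \<gamma> t s * (if s \<le> v then 1 else 0)"
    proof (cases "t \<in> {0<..\<delta>} \<and> s \<in> {0<..w}")
      case False
      then show ?thesis using psi_nonneg[OF g, of t s] by (auto simp: B_def)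
    next
      case True
      hence t: "0 < t" "t \<le> 1" and s: "0 < s" "s \<le> w" "s \<le> v" using d w by auto
      have "B t s = (t powr (\<gamma>-1) / Gamma \<gamma> * s powr (t-1)) * (t * exp(- exp 1))"
        using True t by (simp add: B_def K_def powr_diff field_simps)
      also have "\<dots> \<le> (t powr (\<gamma>-1) / Gamma \<gamma> * s powr (t-1)) * (rGamma t * exp (- (exp 1 * s)))"
      proof (intro mult_left_mono mult_mono)
        show "t \<le> rGamma t" using rGamma_ge[OF t] .
        show "exp (- exp 1) \<le> exp (- (exp 1 * s))" using s w by simp
      qed (use Gp t rGamma_ge[OF t] in auto)
      also have "\<dots> = psi \<gamma> t s * (if s \<le> v then 1 else 0)"
        using True s by (simp add: psi_def)
      finally show ?thesis .
    qed
  qed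
  moreover have "(\<integral>\<^sup>+t. ennreal (indicator {0<..\<delta>} t * (K * exp (-1)) * t powr (\<gamma>-1)) \<partial>lborel) =
      ennreal (K * exp (-1) * (\<delta> powr \<gamma> / \<gamma>))"
  proof -
    have "(\<integral>\<^sup>+t. ennreal (indicator {0<..\<delta>} t * (K * exp (-1)) * t powr (\<gamma>-1)) \<partial>lborel) =
        (\<integral>\<^sup>+t. ennreal (K * exp (-1)) * ennreal (indicator {0<..\<delta>} t * t powr (\<gamma>-1)) \<partial>lborel)"
      using K by (intro nn_integral_cong) (simp add: ennreal_mult[symmetric] mult_ac)
    also have "\<dots> = ennreal (K * exp (-1)) * ennreal (\<delta> powr (\<gamma> - 1 + 1) / (\<gamma> - 1 + 1))"
      using g d by (subst nn_integral_cmult) (measurable, simp only: PW)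
    finally show ?thesis using K g d by (simp add: ennreal_mult[symmetric])
  qed
  moreover have "exp(- exp 1 - 1) / (Gamma \<gamma> * \<gamma> * 2 powr \<gamma>) * ln (exp 1 + 1/v) powr (-\<gamma>) \<le> K * exp (-1) * (\<delta> powr \<gamma> / \<gamma>)"
  proof -
    have lnpos: "ln (exp 1 + 1/v) \<ge> 1"
    proof -
      have "exp 1 \<le> exp 1 + 1/v" using v by simp
      hence "ln (exp 1) \<le> ln (exp 1 + 1/v)" by (subst ln_le_cancel_iff) (use ep in auto)
      thus ?thesis by simp
    qed
    have "1 + L \<le> 2 * ln (exp 1 + 1/v)"
    proof (cases "v \<le> 1")
      case True
      hence "L = ln (1/v)" by (simp add: L_def w_def)
      also have "\<dots> \<le> ln (exp 1 + 1/v)" using v by (subst ln_le_cancel_iff) (use ep in auto)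
      finally show ?thesis using lnpos by simp
    next
      case False
      hence "L = 0" by (simp add: L_def w_def)
      thus ?thesis using lnpos by simp
    qed
    hence "(2 * ln (exp 1 + 1/v)) powr (-\<gamma>) \<le> (1 + L) powr (-\<gamma>)"
      using L g by (intro powr_mono2') auto
    moreover have "(2 * ln (exp 1 + 1/v)) powr (-\<gamma>) = ln (exp 1 + 1/v) powr (-\<gamma>) / 2 powr \<gamma>"
      using lnpos by (simp add: powr_mult powr_minus_divide)
    moreover have "(1 + L) powr (-\<gamma>) = \<delta> powr \<gamma>"
      using L by (simp add: \<delta>_def powr_minus_divide powr_divide)
    ultimately have "ln (exp 1 + 1/v) powr (-\<gamma>) / 2 powr \<gamma> \<le> \<delta> powr \<gamma>" by simp
    hence "(exp(- exp 1 - 1) / (Gamma \<gamma> * \<gamma>)) * (ln (exp 1 + 1/v) powr (-\<gamma>) / 2 powr \<gamma>) \<le> (exp(- exp 1 - 1) / (Gamma \<gamma> * \<gamma>)) * \<delta> powr \<gamma>"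
      using Gp g by (intro mult_left_mono) auto
    moreover have "K * exp (-1) * (\<delta> powr \<gamma> / \<gamma>) = (exp(- exp 1 - 1) / (Gamma \<gamma> * \<gamma>)) * \<delta> powr \<gamma>"
      by (simp add: K_def exp_diff exp_minus field_simps)
    ultimately show ?thesis by (simp add: field_simps)
  qed
  ultimately show ?thesis
    by (smt (verit, ccfv_SIG) ennreal_leI order_trans)
qed



definition rho :: "real \<Rightarrow> real \<Rightarrow> real" where
  "rho \<gamma> u = enn2real (R \<gamma> u)"

lemma rho_meas[measurable]: "rho \<gamma> \<in> borel_measurable borel"
  unfolding rho_def[abs_def] by measurable

lemma rho_nonneg: "rho \<gamma> u \<ge> 0"
  by (simp add: rho_def)

lemma R_rho: "\<gamma> > 0 \<Longrightarrow> R \<gamma> u = ennreal (rho \<gamma> u)"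
  unfolding rho_def using R_le1[of \<gamma> u]
  by (simp add: ennreal_enn2real_if top.extremum_unique) (metis ennreal_one_neq_top top.extremum_unique)

lemma rho_le1: "\<gamma> > 0 \<Longrightarrow> rho \<gamma> u \<le> 1"
  using R_le1[of \<gamma> u] R_rho[of \<gamma> u] by simp

lemma rho_lower:
  assumes "\<gamma> > 0" "v > 0"
  shows "exp(- exp 1 - 1) / (Gamma \<gamma> * \<gamma> * 2 powr \<gamma>) * ln (exp 1 + 1/v) powr (-\<gamma>) \<le> rho \<gamma> v"
  using R_lower[OF assms] R_rho[OF assms(1), of v] rho_nonneg[of \<gamma> v]
  by (simp add: ennreal_le_iff)

lemma REP_real:
  assumes g: "\<gamma> > 0" and l: "la > (0::real)"
  shows "has_bochner_integral lborel (\<lambda>u. rho \<gamma> u * (indicator {0..} u * exp(-la * u))) (ln (exp 1 + la) powr (-\<gamma>) / la)"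
proof (rule has_bochner_integral_nn_integral)
  show "(\<lambda>u. rho \<gamma> u * (indicator {0..} u * exp(-la * u))) \<in> borel_measurable lborel" by measurable
  show "AE x in lborel. 0 \<le> rho \<gamma> x * (indicator {0..} x * exp (- la * x))"
    by (simp add: rho_nonneg)
  have "1 < exp 1 + la" using l by (smt (verit) one_less_exp_iff)
  hence "0 < ln (exp 1 + la)" by simp
  thus "0 \<le> ln (exp 1 + la) powr - \<gamma> / la" using l by simp
  have "(\<integral>\<^sup>+u. ennreal (rho \<gamma> u * (indicator {0..} u * exp(-la * u))) \<partial>lborel) =
        (\<integral>\<^sup>+u. R \<gamma> u * ennreal (indicator {0..} u * exp(-la * u)) \<partial>lborel)"
    using g by (intro nn_integral_cong) (simp add: R_rho ennreal_mult rho_nonneg)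
  also have "\<dots> = ennreal (ln (exp 1 + la) powr (-\<gamma>) / la)" by (rule REP[OF g l])
  finally show "(\<integral>\<^sup>+u. ennreal (rho \<gamma> u * (indicator {0..} u * exp(-la * u))) \<partial>lborel) =
        ennreal (ln (exp 1 + la) powr (-\<gamma>) / la)" .
qed

lemma inv_pow_int:
  assumes e: "e > (0::real)"
  shows "integrable lborel (\<lambda>u. indicator {e..} u / u^3)"
proof (rule integrableI_nn_integral_finite)
  show "(\<lambda>u. indicator {e..} u / u^3) \<in> borel_measurable lborel" by measurable
  show "AE x in lborel. 0 \<le> indicator {e..} x / x ^ 3" using e by (auto simp: indicator_def)
  have "(\<integral>\<^sup>+u. ennreal (indicator {e..} u / u^3) \<partial>lborel) = (\<integral>\<^sup>+u\<in>{e..}. ennreal (1/u^3) \<partial>lborel)"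
    by (intro nn_integral_cong) (auto simp: indicator_def)
  also have "\<dots> = ennreal (0 - (- 1/(2*e^2)))"
  proof (rule nn_integral_FTC_atLeast)
    show "((\<lambda>x. - 1/(2*x^2)) has_real_derivative 1/x^3) (at x)" if "e \<le> x" for x
      using that e by (auto intro!: derivative_eq_intros simp: field_simps power2_eq_square power3_eq_cube)
    show "((\<lambda>x::real. - 1/(2*x^2)) \<longlongrightarrow> 0) at_top" by real_asymp
    show "0 \<le> 1/x^3" if "e \<le> x" for x using that e by simp
  qed measurable
  finally show "(\<integral>\<^sup>+u. ennreal (indicator {e..} u / u^3) \<partial>lborel) = ennreal (1/(2*e^2))" by simp
qed

lemma inv_sq_int:
  assumes e: "e > (0::real)"
  shows "integrable lborel (\<lambda>u. indicator {0..} u / (u + e)^2)"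
proof (rule integrableI_nn_integral_finite)
  show "(\<lambda>u. indicator {0..} u / (u+e)^2) \<in> borel_measurable lborel" by measurable
  show "AE x in lborel. 0 \<le> indicator {0..} x / (x+e) ^ 2" by (auto simp: indicator_def)
  have "(\<integral>\<^sup>+u. ennreal (indicator {0..} u / (u+e)^2) \<partial>lborel) = (\<integral>\<^sup>+u\<in>{0..}. ennreal (1/(u+e)^2) \<partial>lborel)"
    by (intro nn_integral_cong) (auto simp: indicator_def)
  also have "\<dots> = ennreal (0 - (- 1/(0+e)))"
  proof (rule nn_integral_FTC_atLeast)
    show "((\<lambda>x. - 1/(x+e)) has_real_derivative 1/(x+e)^2) (at x)" if "0 \<le> x" for x
      using that e by (auto intro!: derivative_eq_intros simp: field_simps power2_eq_square)
    show "((\<lambda>x. - 1/(x+e)) \<longlongrightarrow> 0) at_top" by real_asymp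
  qed auto
  finally show "(\<integral>\<^sup>+u. ennreal (indicator {0..} u / (u+e)^2) \<partial>lborel) = ennreal (1/e)" by simp
qed

lemma Hb1:
  assumes b: "b > (0::real)" and a: "a > 0"
  shows "exp(-b/a)/a^3 \<le> 27/b^3"
proof -
  define z where "z = b/a"
  have z: "z > 0" using a b by (simp add: z_def)
  have "z/3 \<le> exp (z/3)" using exp_ge_add_one_self[of "z/3"] by linarith
  hence "(z/3)^3 \<le> exp (z/3) ^ 3" using z by (intro power_mono) auto
  also have "exp (z/3) ^ 3 = exp z" by (simp add: exp_of_nat_mult[symmetric])
  finally have zz: "z^3/27 \<le> exp z" by (simp add: power_divide)
  have "exp(-b/a) = 1 / exp z" by (simp add: z_def exp_minus field_simps)
  also have "\<dots> \<le> 1 / (z^3/27)" using z zz by (intro divide_left_mono) auto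
  finally have "exp(-b/a) \<le> 27 / z^3" by simp
  hence "exp(-b/a)/a^3 \<le> 27/z^3/a^3" using a by (intro divide_right_mono) auto
  also have "27/z^3/a^3 = 27/b^3" using a by (simp add: z_def power_divide)
  finally show ?thesis .
qed



lemma fst_meas_rr[measurable]: "(fst :: real\<times>real \<Rightarrow> real) \<in> borel_measurable borel"
  by (intro borel_measurable_continuous_onI continuous_intros)

lemma snd_meas_rr[measurable]: "(snd :: real\<times>real \<Rightarrow> real) \<in> borel_measurable borel"
  by (intro borel_measurable_continuous_onI continuous_intros)

lemma inner_meas[measurable]: "(\<lambda>k::real\<times>real. k \<bullet> x) \<in> borel_measurable borel"
  by (intro borel_measurable_continuous_onI continuous_intros)

lemma symb_rep:
  assumes g: "\<gamma> > 0" and e: "\<epsilon> > 0"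
  shows "(LINT u|lborel. rho \<gamma> u * indicator {0..} u * (-(fst k * snd k) * exp(-(u+\<epsilon>)*(norm k)\<^sup>2)))
         = symb12 \<gamma> k * exp(-\<epsilon>*(norm k)\<^sup>2)"
proof (cases "k = 0")
  case True
  then show ?thesis by (simp add: symb12_def)
next
  case False
  define la where "la = (norm k)\<^sup>2"
  have la: "la > 0" using False by (simp add: la_def)
  have "(LINT u|lborel. rho \<gamma> u * indicator {0..} u * (-(fst k * snd k) * exp(-(u+\<epsilon>)*(norm k)\<^sup>2)))
      = (LINT u|lborel. (-(fst k * snd k) * exp(-\<epsilon>*la)) * (rho \<gamma> u * (indicator {0..} u * exp(-la * u))))"
    by (intro Bochner_Integration.integral_cong) (auto simp: la_def algebra_simps exp_add[symmetric])
  also have "\<dots> = (-(fst k * snd k) * exp(-\<epsilon>*la)) * (ln (exp 1 + la) powr (-\<gamma>) / la)"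
    using REP_real[OF g la] by (simp add: has_bochner_integral_iff)
  also have "\<dots> = symb12 \<gamma> k * exp(-\<epsilon>*(norm k)\<^sup>2)"
    by (simp add: symb12_def la_def)
  finally show ?thesis .
qed

definition Gx :: "real \<times> real \<Rightarrow> real \<Rightarrow> real" where
  "Gx x a = pi * fst x * snd x / (4*a^3) * exp (-(norm x)\<^sup>2/(4*a))"

lemma Gx_meas[measurable]: "Gx x \<in> borel_measurable borel"
  unfolding Gx_def[abs_def] by measurable

lemma K12_eq:
  assumes g: "\<gamma> > 0" and e: "\<epsilon> > 0"
  shows "K12_reg \<gamma> \<epsilon> x = complex_of_real (1 / (2*pi)^2 * (LINT u|lborel. rho \<gamma> u * indicator {0..} u * Gx x (u+\<epsilon>)))"
proof -
  define \<Phi> where "\<Phi> = (\<lambda>u (k::real\<times>real). complex_of_real (rho \<gamma> u * indicator {0..} u * (-(fst k * snd k) * exp(-(u+\<epsilon>)*(norm k)\<^sup>2))) * cis (k \<bullet> x))"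
  have [measurable]: "(\<lambda>(u,k). \<Phi> u k) \<in> borel_measurable (lborel \<Otimes>\<^sub>M lborel)"
    unfolding \<Phi>_def by measurable
  have normint: "(\<integral>k. norm (\<Phi> u k) \<partial>lborel) = rho \<gamma> u * indicator {0..} u / (u+\<epsilon>)^2" for u
  proof (cases "u \<ge> 0")
    case True
    have a: "u + \<epsilon> > 0" using True e by simp
    have "(\<integral>k. norm (\<Phi> u k) \<partial>lborel) = (\<integral>k. rho \<gamma> u * (\<bar>fst k * snd k\<bar> * exp(-(u+\<epsilon>)*(norm k)\<^sup>2)) \<partial>lborel)"
      using True by (intro Bochner_Integration.integral_cong) (auto simp: \<Phi>_def norm_mult rho_nonneg abs_mult)
    also have "\<dots> = rho \<gamma> u * (1/(u+\<epsilon>)^2)"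
      using G2D_abs[OF a] by (simp add: has_bochner_integral_iff)
    finally show ?thesis using True by simp
  next
    case False
    then show ?thesis by (simp add: \<Phi>_def)
  qed
  have int: "integrable (lborel \<Otimes>\<^sub>M lborel) (\<lambda>(u,k). \<Phi> u k)"
  proof (rule lborel_pair.Fubini_integrable)
    show "(\<lambda>(u,k). \<Phi> u k) \<in> borel_measurable (lborel \<Otimes>\<^sub>M lborel)" by measurable
    have "integrable lborel (\<lambda>u. rho \<gamma> u * indicator {0..} u / (u+\<epsilon>)^2)"
    proof (rule Bochner_Integration.integrable_bound[OF inv_sq_int[OF e]])
      show "(\<lambda>u. rho \<gamma> u * indicator {0..} u / (u+\<epsilon>)^2) \<in> borel_measurable lborel" by measurable
      show "AE u in lborel. norm (rho \<gamma> u * indicator {0..} u / (u+\<epsilon>)^2) \<le> norm (indicator {0..} u / (u+\<epsilon>)^2 :: real)"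
        using rho_le1[OF g] rho_nonneg by (auto simp: indicator_def divide_right_mono)
    qed
    thus "integrable lborel (\<lambda>u. \<integral>k. norm (case (u, k) of (u, k) \<Rightarrow> \<Phi> u k) \<partial>lborel)"
      by (simp add: normint)
    show "AE u in lborel. integrable lborel (\<lambda>k. case (u, k) of (u, k) \<Rightarrow> \<Phi> u k)"
    proof (rule AE_I2)
      fix u :: real
      show "integrable lborel (\<lambda>k. case (u, k) of (u, k) \<Rightarrow> \<Phi> u k)"
      proof (cases "u \<ge> 0")
        case True
        have a: "u + \<epsilon> > 0" using True e by simp
        have "integrable lborel (\<lambda>k::real\<times>real. complex_of_real (rho \<gamma> u) * (complex_of_real (-(fst k * snd k) * exp(-(u+\<epsilon>)*(norm k)\<^sup>2)) * cis (k \<bullet> x)))"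
          using G2D[OF a, of x] by (intro integrable_mult_right) (simp add: has_bochner_integral_iff)
        thus ?thesis using True by (simp add: \<Phi>_def mult_ac)
      next
        case False
        then show ?thesis by (simp add: \<Phi>_def)
      qed
    qed
  qed
  have "(\<integral>k. (\<integral>u. \<Phi> u k \<partial>lborel) \<partial>lborel) = (\<integral>u. (\<integral>k. \<Phi> u k \<partial>lborel) \<partial>lborel)"
    by (rule lborel_pair.Fubini_integral) (use int in simp)
  moreover have "(\<integral>u. \<Phi> u k \<partial>lborel) = complex_of_real (symb12 \<gamma> k * exp (- \<epsilon> * (norm k)\<^sup>2)) * cis (k \<bullet> x)" for k
  proof -
    have "(\<integral>u. \<Phi> u k \<partial>lborel) = complex_of_real (LINT u|lborel. rho \<gamma> u * indicator {0..} u * (-(fst k * snd k) * exp(-(u+\<epsilon>)*(norm k)\<^sup>2))) * cis (k \<bullet> x)"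
      by (simp only: \<Phi>_def integral_mult_left_zero integral_complex_of_real)
    thus ?thesis by (simp only: symb_rep[OF g e])
  qed
  moreover have "(\<integral>k. \<Phi> u k \<partial>lborel) = complex_of_real (rho \<gamma> u * indicator {0..} u * Gx x (u+\<epsilon>))" for u
  proof (cases "u \<ge> 0")
    case True
    have a: "u + \<epsilon> > 0" using True e by simp
    have "(\<integral>k. \<Phi> u k \<partial>lborel) = (\<integral>k. complex_of_real (rho \<gamma> u) * (complex_of_real (-(fst k * snd k) * exp(-(u+\<epsilon>)*(norm k)\<^sup>2)) * cis (k \<bullet> x)) \<partial>lborel)"
      using True by (intro Bochner_Integration.integral_cong) (simp_all add: \<Phi>_def mult_ac)
    also have "\<dots> = complex_of_real (rho \<gamma> u) * complex_of_real (Gx x (u+\<epsilon>))"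
    proof -
      have "(\<integral>k. complex_of_real (-(fst k * snd k) * exp(-(u+\<epsilon>)*(norm k)\<^sup>2)) * cis (k \<bullet> x) \<partial>lborel) = complex_of_real (Gx x (u+\<epsilon>))"
        using G2D[OF a, of x] unfolding has_bochner_integral_iff Gx_def by blast
      thus ?thesis by (simp only: integral_mult_right_zero)
    qed
    finally show ?thesis using True by simp
  next
    case False
    then show ?thesis by (simp add: \<Phi>_def)
  qed
  ultimately have "(\<integral>k. complex_of_real (symb12 \<gamma> k * exp (- \<epsilon> * (norm k)\<^sup>2)) * cis (k \<bullet> x) \<partial>lborel)
      = (\<integral>u. complex_of_real (rho \<gamma> u * indicator {0..} u * Gx x (u+\<epsilon>)) \<partial>lborel)"
    by simp
  also have "\<dots> = complex_of_real (LINT u|lborel. rho \<gamma> u * indicator {0..} u * Gx x (u+\<epsilon>))"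
    by (rule integral_complex_of_real)
  finally show ?thesis unfolding K12_reg_def by simp
qed



lemma Gx_alt:
  assumes "a > 0"
  shows "Gx x a = (pi * fst x * snd x / 4) * (exp (- ((norm x)\<^sup>2/4) / a) / a^3)"
  using assms by (simp add: Gx_def field_simps)

lemma kernel_limit:
  assumes g: "\<gamma> > 0" and x1: "x1 > 0" and x2: "x2 > 0"
  defines "x \<equiv> (x1, x2)"
  shows "((\<lambda>\<epsilon>. LINT u|lborel. rho \<gamma> u * indicator {0..} u * Gx x (u+\<epsilon>)) \<longlongrightarrow>
           (LINT u|lborel. rho \<gamma> u * indicator {0..} u * Gx x u)) (at_right 0)"
    and "integrable lborel (\<lambda>u. rho \<gamma> u * indicator {0..} u * Gx x u)"
proof -
  define c where "c = pi * x1 * x2 / 4"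
  define \<beta> where "\<beta> = (norm x)\<^sup>2/4"
  have c: "c > 0" using x1 x2 by (simp add: c_def)
  have \<beta>: "\<beta> > 0" using x1 by (simp add: \<beta>_def x_def zero_prod_def)
  have Gxa: "Gx x a = c * (exp (- \<beta> / a) / a^3)" if "a > 0" for a
    using Gx_alt[OF that, of x] by (simp add: c_def \<beta>_def x_def)
  define w where "w = (\<lambda>u. c * 27 / \<beta>^3 * indicator {0..1} u + c * (indicator {1..} u / u^3))"
  have w_int: "integrable lborel w"
    unfolding w_def
    by (intro Bochner_Integration.integrable_add integrable_mult_right integrable_mult_left
          integrable_real_indicator inv_pow_int) auto
  have bound: "norm (rho \<gamma> u * indicator {0..} u * Gx x a) \<le> w u" if a: "a \<ge> u" "a > 0" for u a
  proof (cases "u \<ge> 0")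
    case False
    have "w u \<ge> 0" using False by (simp add: w_def)
    thus ?thesis using False by simp
  next
    case True
    have G0: "Gx x a \<ge> 0" using Gxa[OF a(2)] c a(2) by simp
    have "norm (rho \<gamma> u * indicator {0..} u * Gx x a) = rho \<gamma> u * Gx x a"
      using True G0 rho_nonneg by simp
    also have "\<dots> \<le> Gx x a" using rho_le1[OF g] G0 rho_nonneg by (simp add: mult_left_le_one_le)
    also have "\<dots> \<le> w u"
    proof (cases "u \<le> 1")
      case True
      have "Gx x a \<le> c * (27/\<beta>^3)" unfolding Gxa[OF a(2)] using Hb1[OF \<beta> a(2)] c
        by (intro mult_left_mono) auto
      moreover have "c * (indicator {1..} u / u^3) \<ge> 0" using c \<open>u \<ge> 0\<close> by (simp add: indicator_def)
      ultimately show ?thesis using True \<open>u \<ge> 0\<close> by (simp add: w_def)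
    next
      case False
      have "exp (- \<beta> / a) / a^3 \<le> 1 / a^3" using a \<beta> by (intro divide_right_mono) auto
      also have "\<dots> \<le> 1 / u^3" using False a by (intro divide_left_mono power_mono) auto
      finally have "Gx x a \<le> c * (1/u^3)" unfolding Gxa[OF a(2)] using c by (intro mult_left_mono) auto
      thus ?thesis using False by (simp add: w_def)
    qed
    finally show ?thesis .
  qed
  have Gx0: "Gx x 0 = 0" by (simp add: Gx_def)
  define f where "f = (\<lambda>u. rho \<gamma> u * indicator {0..} u * Gx x u)"
  have f_int: "integrable lborel f"
  proof (rule Bochner_Integration.integrable_bound[OF w_int])
    show "f \<in> borel_measurable lborel" unfolding f_def by measurable
    show "AE u in lborel. norm (f u) \<le> norm (w u)"
    proof (rule AE_I2)
      fix u
      have "norm (f u) \<le> w u"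
      proof (cases "u > 0")
        case True thus ?thesis unfolding f_def by (intro bound) auto
      next
        case False thus ?thesis unfolding f_def
          using bound[of 1 u] using c \<beta> by (cases "u = 0") (auto simp: Gx0 w_def indicator_def)
      qed
      thus "norm (f u) \<le> norm (w u)" by simp
    qed
  qed
  thus "integrable lborel (\<lambda>u. rho \<gamma> u * indicator {0..} u * Gx x u)" by (simp add: f_def)
  show "((\<lambda>\<epsilon>. LINT u|lborel. rho \<gamma> u * indicator {0..} u * Gx x (u+\<epsilon>)) \<longlongrightarrow>
           (LINT u|lborel. rho \<gamma> u * indicator {0..} u * Gx x u)) (at_right 0)"
    unfolding tendsto_at_iff_sequentially o_def
  proof (intro allI impI)
    fix X :: "nat \<Rightarrow> real"
    assume H: "\<forall>i. X i \<in> {0<..} - {0}" and lim: "X \<longlonglongrightarrow> 0"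
    have Xpos: "X i > 0" for i using H by auto
    show "(\<lambda>i. LINT u|lborel. rho \<gamma> u * indicator {0..} u * Gx x (u + X i)) \<longlonglongrightarrow>
          (LINT u|lborel. rho \<gamma> u * indicator {0..} u * Gx x u)"
    proof (rule integral_dominated_convergence[where w=w])
      show "(\<lambda>u. rho \<gamma> u * indicator {0..} u * Gx x u) \<in> borel_measurable lborel" by measurable
      show "(\<lambda>u. rho \<gamma> u * indicator {0..} u * Gx x (u + X i)) \<in> borel_measurable lborel" for i
        by measurable
      show "integrable lborel w" by (rule w_int)
      show "AE u in lborel. norm (rho \<gamma> u * indicator {0..} u * Gx x (u + X i)) \<le> w u" for i
      proof (rule AE_I2)
        fix u
        show "norm (rho \<gamma> u * indicator {0..} u * Gx x (u + X i)) \<le> w u"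
        proof (cases "u \<ge> 0")
          case True thus ?thesis using Xpos[of i] by (intro bound) auto
        next
          case False thus ?thesis using bound[of 1 u] c \<beta> by (auto simp: indicator_def w_def)
        qed
      qed
      show "AE u in lborel. (\<lambda>i. rho \<gamma> u * indicator {0..} u * Gx x (u + X i)) \<longlonglongrightarrow> rho \<gamma> u * indicator {0..} u * Gx x u"
        using AE_lborel_singleton[of 0]
      proof eventually_elim
        fix u :: real assume "u \<noteq> 0"
        show "(\<lambda>i. rho \<gamma> u * indicator {0..} u * Gx x (u + X i)) \<longlonglongrightarrow> rho \<gamma> u * indicator {0..} u * Gx x u"
        proof (cases "u > 0")
          case True
          have "isCont (Gx x) u" using True unfolding Gx_def by (intro continuous_intros) auto
          moreover have "(\<lambda>i. u + X i) \<longlonglongrightarrow> u" using tendsto_add[OF tendsto_const lim, of u] by simp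
          ultimately have "(\<lambda>i. Gx x (u + X i)) \<longlonglongrightarrow> Gx x u" by (rule isCont_tendsto_compose)
          thus ?thesis by (intro tendsto_mult tendsto_const)
        next
          case False thus ?thesis using \<open>u \<noteq> 0\<close> by simp
        qed
      qed
    qed
  qed
qed

lemma kernel_lower:
  assumes g: "\<gamma> > 0" and x1: "x1 > 0" and x2: "x2 > 0"
  defines "x \<equiv> (x1, x2)"
  shows "exp(- exp 1 - 1) / (Gamma \<gamma> * \<gamma> * 2 powr \<gamma>) * 2 powr (-\<gamma>) * exp (-1/4) / (128*pi)
           * x1 * x2 / (norm x)^4 * ln (exp 1 + 1 / norm x) powr (-\<gamma>) * exp (- ((norm x)\<^sup>2))
         \<le> 1 / (2*pi)^2 * (LINT u|lborel. rho \<gamma> u * indicator {0..} u * Gx x u)"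
proof -
  define r where "r = norm x"
  have r: "r > 0" using x1 by (simp add: r_def x_def zero_prod_def)
  define L where "L = ln (exp 1 + 1/r)"
  have ep: "0 < exp 1 + 1/r" using r by (intro add_pos_pos) auto
  have L1: "L \<ge> 1"
  proof -
    have "ln (exp 1) \<le> L" unfolding L_def using r by (subst ln_le_cancel_iff) (use ep in auto)
    thus ?thesis by simp
  qed
  define c0 where "c0 = exp(- exp 1 - 1) / (Gamma \<gamma> * \<gamma> * 2 powr \<gamma>)"
  have c0: "c0 > 0" using g by (simp add: c0_def)
  define c where "c = pi * x1 * x2 / 4"
  have c: "c > 0" using x1 x2 by (simp add: c_def)
  define P where "P = c0 * (2 powr (-\<gamma>) * L powr (-\<gamma>)) * (c * (exp (-1/4) / (8*r^6)))"
  define f where "f = (\<lambda>u. rho \<gamma> u * indicator {0..} u * Gx x u)"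
  have f_int: "integrable lborel f" unfolding f_def x_def by (rule kernel_limit(2)[OF g x1 x2])
  have f_nn: "f u \<ge> 0" for u
    unfolding f_def Gx_def using x1 x2 rho_nonneg[of \<gamma> u]
    by (auto simp: indicator_def x_def intro!: mult_nonneg_nonneg divide_nonneg_nonneg)
  have pt: "P \<le> f u" if u: "r^2 \<le> u" "u \<le> 2*r^2" for u
  proof -
    have upos: "u > 0" using u r by (smt (verit) zero_less_power)
    have "ln (exp 1 + 1/u) \<le> ln (exp 1 + 1/r^2)"
      using upos r u by (subst ln_le_cancel_iff) (auto intro!: add_pos_pos divide_left_mono simp: field_simps)
    also have "\<dots> \<le> ln ((exp 1 + 1/r)^2)"
    proof (subst ln_le_cancel_iff)
      show "exp 1 + 1/r^2 \<le> (exp 1 + 1/r)^2"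
      proof -
        have "exp 1 \<le> exp 1 * exp (1::real)" by (simp add: mult_le_cancel_left1)
        moreover have "0 \<le> 2 * exp 1 / r" using r by simp
        moreover have "(exp 1 + 1/r)^2 = exp 1 * exp 1 + 2 * exp 1 / r + 1/r^2"
          using r by (simp add: power2_eq_square field_simps)
        ultimately show ?thesis by linarith
      qed
    qed (use r ep in \<open>auto intro!: add_pos_pos\<close>)
    also have "\<dots> = 2 * L" unfolding L_def using ep by (simp add: ln_realpow)
    finally have lnu: "ln (exp 1 + 1/u) \<le> 2 * L" .
    have lnu1: "ln (exp 1 + 1/u) > 0"
      using upos by (intro ln_gt_zero) (smt (verit) divide_pos_pos one_less_exp_iff)
    have "(2 * L) powr (-\<gamma>) \<le> ln (exp 1 + 1/u) powr (-\<gamma>)"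
      using lnu lnu1 g by (intro powr_mono2') auto
    moreover have "(2 * L) powr (-\<gamma>) = 2 powr (-\<gamma>) * L powr (-\<gamma>)"
      using L1 by (simp add: powr_mult)
    ultimately have rho_b: "c0 * (2 powr (-\<gamma>) * L powr (-\<gamma>)) \<le> rho \<gamma> u"
      using rho_lower[OF g upos] c0 unfolding c0_def[symmetric]
      by (smt (verit) mult_left_mono)
    have Gxu: "Gx x u = c * (exp (- (r^2/4) / u) / u^3)"
      using Gx_alt[OF upos, of x] by (simp add: c_def r_def x_def)
    have e1: "exp (-1/4) \<le> exp (- (r^2/4) / u)"
      using u upos by (auto simp: field_simps)
    have e2: "1/(8*r^6) \<le> 1/u^3"
    proof -
      have "u^3 \<le> (2*r^2)^3" using u upos by (intro power_mono) auto
      also have "\<dots> = 8*r^6" by (simp add: power_mult_distrib power_mult[symmetric])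
      finally have "u^3 \<le> 8*r^6" .
      moreover have "0 < u^3" using upos by simp
      ultimately show ?thesis by (intro frac_le) auto
    qed
    have u3: "0 < u^3" using upos by simp
    have "exp (-1/4) / (8*r^6) \<le> exp (- (r^2/4) / u) / u^3"
    proof (rule frac_le)
      show "u^3 \<le> 8*r^6" using e2 u3 r by (simp add: field_simps)
    qed (use e1 u3 in auto)
    hence G_b: "c * (exp (-1/4) / (8*r^6)) \<le> Gx x u"
      unfolding Gxu using c by (intro mult_left_mono) auto
    have "P \<le> rho \<gamma> u * Gx x u"
      unfolding P_def using rho_b G_b c0 c r rho_nonneg[of \<gamma> u]
      by (intro mult_mono) (auto intro!: mult_nonneg_nonneg)
    thus ?thesis using upos by (simp add: f_def)
  qed
  have int_ind: "integrable lborel (\<lambda>u. indicator {r^2..2*r^2} u * P)"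
    by (intro integrable_mult_left integrable_real_indicator) auto
  have "(LINT u|lborel. indicator {r^2..2*r^2} u * P) \<le> (LINT u|lborel. f u)"
  proof (rule integral_mono[OF int_ind f_int])
    fix u show "indicator {r^2..2*r^2} u * P \<le> f u"
      using pt[of u] f_nn[of u] by (auto simp: indicator_def)
  qed
  moreover have "(LINT u|lborel. indicator {r^2..2*r^2} u * P) = r^2 * P"
    using r by (simp add: measure_lborel_Icc)
  ultimately have main: "r^2 * P \<le> (LINT u|lborel. f u)" by simp
  have "exp(- exp 1 - 1) / (Gamma \<gamma> * \<gamma> * 2 powr \<gamma>) * 2 powr (-\<gamma>) * exp (-1/4) / (128*pi)
           * x1 * x2 / (norm x)^4 * ln (exp 1 + 1 / norm x) powr (-\<gamma>) * exp (- ((norm x)\<^sup>2))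
        \<le> (c0 * 2 powr (-\<gamma>) * exp (-1/4) / (128*pi) * x1 * x2 / r^4 * L powr (-\<gamma>)) * 1"
    unfolding c0_def[symmetric] r_def[symmetric] L_def[symmetric]
    using c0 x1 x2 r by (intro mult_left_mono) auto
  also have "\<dots> = 1 / (2*pi)^2 * (r^2 * P)"
  proof -
    have r6: "r^6 = r*(r*r^4)" by (simp add: eval_nat_numeral)
    show ?thesis using r by (simp add: P_def c_def field_simps power2_eq_square r6)
  qed
  also have "\<dots> \<le> 1 / (2*pi)^2 * (LINT u|lborel. f u)"
    using main by (intro mult_left_mono) auto
  finally show ?thesis unfolding f_def .
qed



theorem lemma3p1:
  fixes \<gamma> :: real
  assumes "\<gamma> > 0"
  shows "\<exists>C>0. \<forall>x1 x2 :: real. x1 > 0 \<longrightarrow> x2 > 0 \<longrightarrow>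
           (\<exists>K :: real.
              ((\<lambda>\<epsilon>. K12_reg \<gamma> \<epsilon> (x1, x2)) \<longlongrightarrow> complex_of_real K) (at_right 0) \<and>
              K \<ge> C * x1 * x2 / (norm (x1, x2))^4
                   * (ln (exp 1 + 1 / norm (x1, x2))) powr (- \<gamma>)
                   * exp (- ((norm (x1, x2))^2)))"
proof -
  note g = assms
  define C where "C = exp(- exp 1 - 1) / (Gamma \<gamma> * \<gamma> * 2 powr \<gamma>) * 2 powr (-\<gamma>) * exp (-1/4) / (128*pi)"
  have Cpos: "C > 0" using g by (simp add: C_def)
  show ?thesis
  proof (rule exI[of _ C], intro conjI allI impI Cpos)
    fix x1 x2 :: real
    assume x1: "x1 > 0" and x2: "x2 > 0"
    define K where "K = 1 / (2*pi)^2 * (LINT u|lborel. rho \<gamma> u * indicator {0..} u * Gx (x1, x2) u)"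
    show "\<exists>K :: real.
              ((\<lambda>\<epsilon>. K12_reg \<gamma> \<epsilon> (x1, x2)) \<longlongrightarrow> complex_of_real K) (at_right 0) \<and>
              K \<ge> C * x1 * x2 / (norm (x1, x2))^4
                   * (ln (exp 1 + 1 / norm (x1, x2))) powr (- \<gamma>)
                   * exp (- ((norm (x1, x2))^2))"
    proof (intro exI[of _ K] conjI)
      have "((\<lambda>\<epsilon>. complex_of_real (1 / (2*pi)^2 * (LINT u|lborel. rho \<gamma> u * indicator {0..} u * Gx (x1, x2) (u+\<epsilon>))))
              \<longlongrightarrow> complex_of_real K) (at_right 0)"
        unfolding K_def by (intro tendsto_of_real tendsto_mult tendsto_const kernel_limit(1)[OF g x1 x2])
      moreover have "eventually (\<lambda>\<epsilon>. complex_of_real (1 / (2*pi)^2 * (LINT u|lborel. rho \<gamma> u * indicator {0..} u * Gx (x1, x2) (u+\<epsilon>)))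
              = K12_reg \<gamma> \<epsilon> (x1, x2)) (at_right 0)"
        using eventually_at_right_less[of "0::real"]
        by eventually_elim (simp add: K12_eq[OF g])
      ultimately show "((\<lambda>\<epsilon>. K12_reg \<gamma> \<epsilon> (x1, x2)) \<longlongrightarrow> complex_of_real K) (at_right 0)"
        by (rule Lim_transform_eventually)
      show "K \<ge> C * x1 * x2 / (norm (x1, x2))^4
                   * (ln (exp 1 + 1 / norm (x1, x2))) powr (- \<gamma>)
                   * exp (- ((norm (x1, x2))^2))"
        unfolding K_def C_def by (rule kernel_lower[OF g x1 x2])
    qed
  qed
qed


end
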